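(* Let $p$ and $p'$ be consecutive patterns of the same length that are both non-overlapping and are interchangeable. Then $p$ and $p'$ are super-strongly Wilf equivalent.
   Context: An inversion sequence of length $n$ is an integer sequence $e=e_1e_2\dots e_n$ with $0\le e_i<i$ for all $i$; $\mathbf{I}_n$ denotes the set of these. A pattern of length $r$ is a sequence $p=p_1\dots p_r$ with $p_i\in\{0,\dots,r-1\}$ such that whenever a value $j>0$ appears in $p$, the value $j-1$ also appears. The reduction of an integer word $w$ is obtained by replacing every occurrence of the $i$-th smallest distinct value of $w$ by $i-1$. An inversion sequence $e$ has an occurrence of the consecutive pattern $p$ in position $i$ if the reduction of $e_i\dots e_{i+r-1}$ equals $p$; $\mathrm{Em}(p,e)$ is the set of such positions. $p=p_1\dots p_r$ is non-overlapping if for every $1<i<r$ the reductions of $p_1\dots p_i$ and $p_{r-i+1}\dots p_r$ differ. Given patterns $p,p'$ of length $r$ with $p_1=p'_1$, $p_r=p'_r$ and $\max_i p_i=\max_i p'_i$, $p$ is changeable for $p'$ if for all $1\le i\le r$, $p'_i\le\max(\{p_j:1\le j\le i\}\cup\{p_j-j+i: i<j\le r\})$; $p$ and $p'$ are interchangeable if each is changeable for the other. Two patterns are super-strongly Wilf equivalent if $|\{e\in\mathbf{I}_n:\mathrm{Em}(p,e)=T\}|=|\{e\in\mathbf{I}_n:\mathrm{Em}(p',e)=T\}|$ for all $n$ and all $T\subseteq[n]$. *)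

theory Defs
  imports Main
begin

text \<open>Words are lists of naturals; positions are 1-indexed as in the paper,
  so the paper's e_i is  e ! (i - 1).\<close>

definition inv_seqs :: "nat \<Rightarrow> nat list set" where
  "inv_seqs n = {e. length e = n \<and> (\<forall>i<n. e ! i < Suc i)}"

text \<open>Reduction: the i-th smallest distinct value (i \<ge> 1) becomes i - 1, i.e.
  each value is replaced by the number of distinct values of the word below it.\<close>
definition reduction :: "nat list \<Rightarrow> nat list" where
  "reduction w = map (\<lambda>x. card {y \<in> set w. y < x}) w"

definition is_pattern :: "nat list \<Rightarrow> bool" where
  "is_pattern p \<longleftrightarrow> (\<forall>i<length p. p ! i < length p) \<and>
     (\<forall>j \<in> set p. 0 < j \<longrightarrow> j - 1 \<in> set p)"

definition factor :: "nat list \<Rightarrow> nat \<Rightarrow> nat \<Rightarrow> nat list" where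
  "factor e i r = take r (drop (i - 1) e)"

definition Em :: "nat list \<Rightarrow> nat list \<Rightarrow> nat set" where
  "Em p e = {i. 1 \<le> i \<and> i + length p - 1 \<le> length e \<and>
                reduction (factor e i (length p)) = p}"

definition non_overlapping :: "nat list \<Rightarrow> bool" where
  "non_overlapping p \<longleftrightarrow>
     (\<forall>i. 1 < i \<and> i < length p \<longrightarrow>
        reduction (take i p) \<noteq> reduction (drop (length p - i) p))"

text \<open>Changeable, with the paper's standing conditions (same length r,
  p_1 = p'_1, p_r = p'_r, equal maxima) included. The shifted values p_j - j + i are computed in int.\<close>
definition changeable :: "nat list \<Rightarrow> nat list \<Rightarrow> bool" where
  "changeable p p' \<longleftrightarrow>
     (let r = length p in
      length p' = r \<and> r \<ge> 1 \<and> p ! 0 = p' ! 0 \<and> p ! (r - 1) = p' ! (r - 1) \<and>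
      Max (set p) = Max (set p') \<and>
      (\<forall>i\<in>{1..r}. int (p' ! (i - 1)) \<le>
          Max ((\<lambda>j. int (p ! (j - 1))) ` {1..i} \<union>
               (\<lambda>j. int (p ! (j - 1)) - int j + int i) ` {i<..r})))"

definition interchangeable :: "nat list \<Rightarrow> nat list \<Rightarrow> bool" where
  "interchangeable p p' \<longleftrightarrow> changeable p p' \<and> changeable p' p"

definition super_strongly_wilf_equiv :: "nat list \<Rightarrow> nat list \<Rightarrow> bool" where
  "super_strongly_wilf_equiv p p' \<longleftrightarrow>
     (\<forall>n. \<forall>T \<subseteq> {1..n}.
        card {e \<in> inv_seqs n. Em p e = T} = card {e \<in> inv_seqs n. Em p' e = T})"

end

theory Submission
  imports Defs
begin


definition rk :: "nat set \<Rightarrow> nat \<Rightarrow> nat" where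
  "rk A x = card {y \<in> A. y < x}"

lemma reduction_rk: "reduction w = map (rk (set w)) w"
  by (simp add: reduction_def rk_def)

lemma rk_mono:
  assumes "finite A" "x \<in> A" "x < y" shows "rk A x < rk A y"
proof -
  have "{z \<in> A. z < x} \<subset> {z \<in> A. z < y}" using assms by auto
  then show ?thesis unfolding rk_def by (intro psubset_card_mono) (auto simp: assms)
qed

lemma rk_le_imp:
  assumes "finite A" "x \<in> A" "y \<in> A" "rk A x \<le> rk A y" shows "x \<le> y"
  using rk_mono[OF assms(1) assms(3), of x] assms by (meson leD not_le_imp_less)

lemma rk_inj:
  assumes "finite A" "x \<in> A" "y \<in> A" "rk A x = rk A y" shows "x = y"
  using rk_le_imp[OF assms(1,2,3)] rk_le_imp[OF assms(1,3,2)] assms(4) by simp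

lemma rk_gap:
  assumes "finite A" shows "rk A y \<le> rk A x + (y - x)"
proof -
  have "{z \<in> A. z < y} \<subseteq> {z \<in> A. z < x} \<union> {x..<y}" by auto
  then have "card {z \<in> A. z < y} \<le> card ({z \<in> A. z < x} \<union> {x..<y})"
    by (intro card_mono) (auto simp: assms)
  also have "\<dots> \<le> card {z \<in> A. z < x} + card {x..<y}" by (rule card_Un_le)
  finally show ?thesis by (simp add: rk_def)
qed

lemma reduction_map:
  assumes "\<And>x y. x \<in> set w \<Longrightarrow> y \<in> set w \<Longrightarrow> (f x < f y \<longleftrightarrow> x < y)"
  shows "reduction (map f w) = reduction w"
proof -
  have inj: "inj_on f (set w)"
    by (rule inj_onI) (metis assms linorder_neqE_nat order_less_irrefl)
  have "rk (f ` set w) (f x) = rk (set w) x" if "x \<in> set w" for x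
  proof -
    have "{y \<in> f ` set w. y < f x} = f ` {y \<in> set w. y < x}"
      using assms that by auto
    moreover have "inj_on f {y \<in> set w. y < x}" using inj by (rule inj_on_subset) auto
    ultimately show ?thesis unfolding rk_def by (simp add: card_image)
  qed
  then show ?thesis by (simp add: reduction_rk)
qed

lemma rk_strict: "finite A \<Longrightarrow> x \<in> A \<Longrightarrow> y \<in> A \<Longrightarrow> (rk A x < rk A y \<longleftrightarrow> x < y)"
  using rk_mono[of A x y] rk_mono[of A y x] by (metis less_asym linorder_neqE_nat order_less_irrefl)

lemma reduction_drop: "reduction (drop d (reduction w)) = reduction (drop d w)"
proof -
  have "drop d (reduction w) = map (rk (set w)) (drop d w)" by (simp add: reduction_rk drop_map)
  moreover have "reduction (map (rk (set w)) (drop d w)) = reduction (drop d w)"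
    by (rule reduction_map) (meson in_set_dropD rk_strict finite_set)
  ultimately show ?thesis by simp
qed

lemma reduction_take: "reduction (take d (reduction w)) = reduction (take d w)"
proof -
  have "take d (reduction w) = map (rk (set w)) (take d w)" by (simp add: reduction_rk take_map)
  moreover have "reduction (map (rk (set w)) (take d w)) = reduction (take d w)"
    by (rule reduction_map) (meson in_set_takeD rk_strict finite_set)
  ultimately show ?thesis by simp
qed

lemma Em_facts:
  assumes "t \<in> Em p e"
  shows "1 \<le> t" "t + length p - 1 \<le> length e" "reduction (factor e t (length p)) = p"
    "length (factor e t (length p)) = length p"
    "\<And>k. k < length p \<Longrightarrow> factor e t (length p) ! k = e ! (t - 1 + k)"
  using assms by (auto simp: Em_def factor_def)

lemma Em_rank:
  assumes "t \<in> Em p e" "k < length p"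
  shows "rk (set (factor e t (length p))) (e ! (t - 1 + k)) = p ! k"
proof -
  have "reduction (factor e t (length p)) ! k = p ! k" using Em_facts(3)[OF assms(1)] by simp
  then show ?thesis using Em_facts(4,5)[OF assms(1)] assms(2) by (simp add: reduction_rk)
qed

lemma Em_val_in:
  assumes "t \<in> Em p e" "k < length p"
  shows "e ! (t - 1 + k) \<in> set (factor e t (length p))"
  using Em_facts(4,5)[OF assms(1)] assms(2) by (metis nth_mem)

lemma spacing:
  assumes no: "non_overlapping p" and t: "t \<in> Em p e" and t': "t' \<in> Em p e" and lt: "t < t'"
  shows "t + length p \<le> t' + 1"
proof (rule ccontr)
  assume "\<not> ?thesis"
  define r where "r = length p"
  define d where "d = t' - t"
  define L where "L = r - d"
  have d1: "d \<ge> 1" and dr: "d + 2 \<le> r" using lt \<open>\<not> _\<close> by (auto simp: d_def r_def)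
  have L1: "1 < L" "L < r" using d1 dr by (auto simp: L_def)
  have len: "t' + r - 1 \<le> length e" using Em_facts(2)[OF t'] by (simp add: r_def)
  have t1: "1 \<le> t" using Em_facts(1)[OF t] .
  have eq1: "drop d (factor e t r) = take L (drop (t' - 1) e)"
    unfolding factor_def L_def d_def using lt t1 by (simp add: drop_take add.commute)
  have eq2: "take L (factor e t' r) = take L (drop (t' - 1) e)"
    unfolding factor_def using L1 by simp
  have "reduction (drop d p) = reduction (take L (drop (t' - 1) e))"
    using reduction_drop[of d "factor e t r"] Em_facts(3)[OF t] eq1 by (simp add: r_def)
  also have "\<dots> = reduction (take L p)"
    using reduction_take[of L "factor e t' r"] Em_facts(3)[OF t'] eq2 by (simp add: r_def)
  finally have "reduction (take L p) = reduction (drop (length p - L) p)"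
    using L1 dr by (simp add: L_def r_def)
  with no L1 show False unfolding non_overlapping_def r_def by blast
qed

lemma down_closed:
  assumes m: "(M::nat) \<in> S" and cl: "\<And>j. j \<in> S \<Longrightarrow> 0 < j \<Longrightarrow> j - 1 \<in> S"
  shows "M - k \<in> S"
  proof (induction k)
    case 0 then show ?case using m by simp
  next
    case (Suc k)
    have e: "M - Suc k = M - k - 1" by simp
    show ?case
    proof (cases "M - k = 0")
      case True then show ?thesis using Suc e by (metis diff_0_eq_0)
    next
      case False
      then show ?thesis using cl[of "M - k"] Suc e by (metis gr0I)
    qed
  qed

lemma pattern_set:
  assumes "is_pattern p" "p \<noteq> []" shows "set p = {0..Max (set p)}"
proof
  show "set p \<subseteq> {0..Max (set p)}" by auto
  have m: "Max (set p) \<in> set p" using assms by simp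
  have cl: "j - 1 \<in> set p" if "j \<in> set p" "0 < j" for j
    using assms(1) that unfolding is_pattern_def by blast
  show "{0..Max (set p)} \<subseteq> set p"
  proof
    fix j assume "j \<in> {0..Max (set p)}"
    then have "Max (set p) - (Max (set p) - j) = j" by simp
    then show "j \<in> set p" using down_closed[OF m cl, of "Max (set p) - j"] by simp
  qed
qed



definition sig :: "nat list \<Rightarrow> nat list \<Rightarrow> nat \<Rightarrow> nat" where
  "sig p q k = (SOME j. j < length p \<and> p ! j = q ! k)"

definition inner :: "nat \<Rightarrow> nat set \<Rightarrow> nat \<Rightarrow> nat \<Rightarrow> bool" where
  "inner r T i t \<longleftrightarrow> t \<in> T \<and> t \<le> i \<and> i + 2 < t + r"

definition repl :: "nat list \<Rightarrow> nat list \<Rightarrow> nat set \<Rightarrow> nat list \<Rightarrow> nat list" where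
  "repl p q T e = map (\<lambda>i. if \<exists>t. inner (length p) T i t
      then (let t = THE t. inner (length p) T i t in e ! (t - 1 + sig p q (i + 1 - t)))
      else e ! i) [0..<length e]"

definition spaced :: "nat \<Rightarrow> nat set \<Rightarrow> bool" where
  "spaced r T \<longleftrightarrow> (\<forall>t\<in>T. \<forall>t'\<in>T. t < t' \<longrightarrow> t + r \<le> t' + 1)"

lemma spaced_Em: "non_overlapping p \<Longrightarrow> T \<subseteq> Em p e \<Longrightarrow> spaced (length p) T"
  unfolding spaced_def using spacing by blast

lemma sig_prop:
  assumes "set q \<subseteq> set p" "k < length q"
  shows "sig p q k < length p \<and> p ! (sig p q k) = q ! k"
proof -
  have "q ! k \<in> set p" using assms by auto
  then obtain j where "j < length p" "p ! j = q ! k" by (auto simp: in_set_conv_nth)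
  then show ?thesis unfolding sig_def by (metis (mono_tags, lifting) someI)
qed

lemma inner_window:
  assumes "spaced r T" "inner r T i t'" "t \<in> T" "t \<le> i + 1" "i + 2 \<le> t + r"
  shows "t' = t"
proof (rule ccontr)
  assume ne: "t' \<noteq> t"
  have t': "t' \<in> T" "t' \<le> i" "i + 2 < t' + r" using assms(2) by (auto simp: inner_def)
  show False
  proof (cases "t < t'")
    case True
    then have "t + r \<le> t' + 1" using assms(1,3) t' unfolding spaced_def by blast
    then show False using t' assms(5) by linarith
  next
    case False
    then have "t' < t" using ne by simp
    then have "t' + r \<le> t + 1" using assms(1,3) t' unfolding spaced_def by blast
    then show False using t' assms(4) by linarith
  qed
qed

lemma inner_unique:
  assumes "spaced r T" "inner r T i t" "inner r T i t'" shows "t = t'"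
  using inner_window[OF assms(1,3), of t] assms(2) by (simp add: inner_def)

lemma the_inner:
  assumes "spaced r T" "inner r T i t" shows "(THE t. inner r T i t) = t"
  using assms inner_unique by blast


definition compat :: "nat list \<Rightarrow> nat list \<Rightarrow> bool" where
  "compat p q \<longleftrightarrow> length q = length p \<and> 1 \<le> length p \<and> p ! 0 = q ! 0 \<and>
     p ! (length p - 1) = q ! (length p - 1) \<and> set p = set q"

lemma sig_prop':
  assumes "compat p q" "k < length p"
  shows "sig p q k < length p" "p ! (sig p q k) = q ! k"
  using sig_prop[of q p k] assms by (auto simp: compat_def)

lemma window:
  assumes c: "compat p q" and sp: "spaced (length p) T" and TE: "T \<subseteq> Em p e"
    and t: "t \<in> T" and k: "k < length p"
  shows "repl p q T e ! (t - 1 + k) = e ! (t - 1 + sig p q k)"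
proof -
  define r where "r = length p"
  have tE: "t \<in> Em p e" using t TE by blast
  have t1: "1 \<le> t" and len: "t + r - 1 \<le> length e" using Em_facts(1,2)[OF tE] by (auto simp: r_def)
  define i where "i = t - 1 + k"
  have il: "i < length e" using len k t1 by (simp add: i_def r_def)
  have ri: "repl p q T e ! i = (if \<exists>t. inner r T i t
      then (let t = THE t. inner r T i t in e ! (t - 1 + sig p q (i + 1 - t)))
      else e ! i)" using il by (auto simp: repl_def r_def)
  have sk: "sig p q k < length p" "p ! (sig p q k) = q ! k" using sig_prop'[OF c k] by auto
  show ?thesis
  proof (cases "\<exists>t. inner r T i t")
    case True
    then obtain t' where t': "inner r T i t'" by blast
    have "t' = t" using inner_window[OF sp[folded r_def] t' t] t1 k by (simp add: i_def r_def)
    then have "(THE t. inner r T i t) = t" using the_inner[OF sp[folded r_def] t'] by simp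
    then show ?thesis using ri True t1 by (simp add: i_def)
  next
    case False
    then have "\<not> inner r T i t" by blast
    then have kk: "k = 0 \<or> k = r - 1" using t t1 k by (auto simp: inner_def i_def r_def)
    then have pk: "p ! k = q ! k" using c by (auto simp: compat_def r_def)
    define W where "W = factor e t (length p)"
    have "rk (set W) (e ! (t - 1 + sig p q k)) = rk (set W) (e ! (t - 1 + k))"
      using Em_rank[OF tE sk(1)] Em_rank[OF tE k] sk(2) pk by (simp add: W_def)
    then have "e ! (t - 1 + sig p q k) = e ! (t - 1 + k)"
      using rk_inj[of "set W"] Em_val_in[OF tE sk(1)] Em_val_in[OF tE k] by (simp add: W_def)
    then show ?thesis using ri False by (simp add: i_def)
  qed
qed


lemma same_val:
  assumes tE: "t \<in> Em p e" and j: "j < length p" "j' < length p" and eq: "p ! j = p ! j'"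
  shows "e ! (t - 1 + j) = e ! (t - 1 + j')"
  using rk_inj[of "set (factor e t (length p))"] Em_val_in[OF tE j(1)] Em_val_in[OF tE j(2)]
    Em_rank[OF tE j(1)] Em_rank[OF tE j(2)] eq by simp

lemma repl_length[simp]: "length (repl p q T e) = length e"
  by (simp add: repl_def)

lemma compat_sym: "compat p q \<Longrightarrow> compat q p"
  by (auto simp: compat_def)

lemma repl_Em:
  assumes c: "compat p q" and sp: "spaced (length p) T" and TE: "T \<subseteq> Em p e"
  shows "T \<subseteq> Em q (repl p q T e)"
proof
  fix t assume t: "t \<in> T"
  define r where "r = length p"
  have lq: "length q = r" using c by (simp add: compat_def r_def)
  have tE: "t \<in> Em p e" using t TE by blast
  have t1: "1 \<le> t" and len: "t + r - 1 \<le> length e" using Em_facts(1,2)[OF tE] by (auto simp: r_def)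
  define e' where "e' = repl p q T e"
  define W where "W = factor e t r"
  define W' where "W' = factor e' t r"
  have lW': "length W' = r" using len t1 by (simp add: W'_def e'_def factor_def)
  have W'k: "W' ! k = e ! (t - 1 + sig p q k)" if "k < r" for k
  proof -
    have le: "length e' = length e" by (simp add: e'_def)
    have "W' ! k = e' ! (t - 1 + k)" using that len t1 le by (simp add: W'_def factor_def)
    then show ?thesis using window[OF c sp TE t, of k] that by (simp add: e'_def r_def)
  qed
  have Wj: "e ! (t - 1 + j) \<in> set W" if "j < r" for j
    using Em_val_in[OF tE, of j] that by (simp add: W_def r_def)
  have lW: "length W = r" using Em_facts(4)[OF tE] by (simp add: W_def r_def)
  have setW: "set W' = set W"
  proof
    show "set W' \<subseteq> set W"
    proof
      fix x assume "x \<in> set W'"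
      then obtain k where k0: "k < length W'" "W' ! k = x" by (auto simp: in_set_conv_nth)
      then have k: "k < r" "x = W' ! k" using lW' by auto
      have kp: "k < length p" using k by (simp add: r_def)
      have "x = e ! (t - 1 + sig p q k)" using W'k k by simp
      then show "x \<in> set W" using Wj sig_prop'(1)[OF c kp] by (simp add: r_def)
    qed
    show "set W \<subseteq> set W'"
    proof
      fix x assume "x \<in> set W"
      then obtain j where j0: "j < length W" "W ! j = x" by (auto simp: in_set_conv_nth)
      then have j: "j < r" "x = W ! j" using lW by auto
      have xj: "x = e ! (t - 1 + j)" using j Em_facts(5)[OF tE] by (simp add: W_def r_def)
      have "p ! j \<in> set p" using j by (simp add: r_def)
      then have "p ! j \<in> set q" using c by (simp add: compat_def)
      then obtain k where k0: "k < length q" "q ! k = p ! j" by (auto simp: in_set_conv_nth)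
      then have k: "k < r" "q ! k = p ! j" using lq by auto
      have kp: "k < length p" using k by (simp add: r_def)
      have "e ! (t - 1 + sig p q k) = e ! (t - 1 + j)"
        using same_val[OF tE sig_prop'(1)[OF c kp]] sig_prop'(2)[OF c kp] k j by (simp add: r_def)
      then have "x = W' ! k" using W'k k xj by simp
      then show "x \<in> set W'" using k lW' by simp
    qed
  qed
  have "reduction W' = q"
  proof (rule nth_equalityI)
    show "length (reduction W') = length q" using lW' lq by (simp add: reduction_rk)
    fix k assume "k < length (reduction W')"
    then have k: "k < r" using lW' by (simp add: reduction_rk)
    have kp: "k < length p" using k by (simp add: r_def)
    have "reduction W' ! k = rk (set W) (e ! (t - 1 + sig p q k))"
      using k lW' W'k setW by (simp add: reduction_rk)
    also have "\<dots> = q ! k" using Em_rank[OF tE sig_prop'(1)[OF c kp]] sig_prop'(2)[OF c kp]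
      by (simp add: W_def r_def)
    finally show "reduction W' ! k = q ! k" .
  qed
  moreover have "length e' = length e" by (simp add: e'_def)
  ultimately show "t \<in> Em q e'" using t1 len lq unfolding Em_def W'_def by (simp add: r_def)
qed


lemma bound:
  assumes c: "compat p q" and ch: "changeable p q" and tE: "t \<in> Em p e"
    and inv: "\<forall>i<length e. e ! i < Suc i" and k: "k < length p"
  shows "e ! (t - 1 + sig p q k) \<le> t - 1 + k"
proof -
  define r where "r = length p"
  have t1: "1 \<le> t" and len: "t + r - 1 \<le> length e" using Em_facts(1,2)[OF tE] by (auto simp: r_def)
  have eb: "e ! (t - 1 + j) \<le> t - 1 + j" if "j < r" for j
  proof -
    have "t - 1 + j < length e" using len t1 that by linarith
    then show ?thesis using inv by (simp add: less_Suc_eq_le)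
  qed
  have all: "\<forall>i\<in>{1..r}. int (q ! (i - 1)) \<le> Max ((\<lambda>j. int (p ! (j - 1))) ` {1..i} \<union>
               (\<lambda>j. int (p ! (j - 1)) - int j + int i) ` {i<..r})"
    using ch unfolding changeable_def Let_def r_def by blast
  define M where "M = Max ((\<lambda>j. int (p ! (j - 1))) ` {1..k+1} \<union>
               (\<lambda>j. int (p ! (j - 1)) - int j + int (k+1)) ` {k+1<..r})"
  have "k + 1 \<in> {1..r}" using k by (simp add: r_def)
  from all[rule_format, OF this] have qM: "int (q ! k) \<le> M" unfolding M_def by simp
  have "M \<in> (\<lambda>j. int (p ! (j - 1))) ` {1..k+1} \<union>
               (\<lambda>j. int (p ! (j - 1)) - int j + int (k+1)) ` {k+1<..r}"
    unfolding M_def by (rule Max_in) auto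
  define v where "v = e ! (t - 1 + sig p q k)"
  define A where "A = set (factor e t (length p))"
  have fA: "finite A" by (simp add: A_def)
  have sk: "sig p q k < r" "p ! (sig p q k) = q ! k" using sig_prop'[OF c k] by (auto simp: r_def)
  have vA: "v \<in> A" and rv: "rk A v = q ! k"
    using Em_val_in[OF tE] Em_rank[OF tE] sk by (auto simp: v_def A_def r_def)
  then consider (a) j where "j \<in> {1..k+1}" "M = int (p ! (j - 1))"
    | (b) j where "j \<in> {k+1<..r}" "M = int (p ! (j - 1)) - int j + int (k+1)"
    using \<open>M \<in> _\<close> by blast
  then show ?thesis
  proof cases
    case (a j)
    define j0 where "j0 = j - 1"
    have j0: "j0 \<le> k" "j0 < r" using a k by (auto simp: j0_def r_def)
    define w where "w = e ! (t - 1 + j0)"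
    have wA: "w \<in> A" and rw: "rk A w = p ! j0"
      using Em_val_in[OF tE] Em_rank[OF tE] j0 by (auto simp: w_def A_def r_def)
    have "q ! k \<le> p ! j0" using qM a by (simp add: j0_def)
    then have "v \<le> w" using rk_le_imp[OF fA vA wA] rv rw by simp
    moreover have "w \<le> t - 1 + j0" using eb j0 by (simp add: w_def)
    ultimately show ?thesis using j0 by (simp add: v_def)
  next
    case (b j)
    define j0 where "j0 = j - 1"
    have j0: "k < j0" "j0 < r" using b k by (auto simp: j0_def r_def)
    define w where "w = e ! (t - 1 + j0)"
    have wA: "w \<in> A" and rw: "rk A w = p ! j0"
      using Em_val_in[OF tE] Em_rank[OF tE] j0 by (auto simp: w_def A_def r_def)
    have "int (q ! k) \<le> int (p ! j0) - int j0 + int k" using qM b j0 by (simp add: j0_def)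
    then have h1: "q ! k + (j0 - k) \<le> p ! j0" using j0 by linarith
    have h2: "rk A w \<le> rk A v + (w - v)" by (rule rk_gap[OF fA])
    have h3: "w \<le> t - 1 + j0" using eb j0 by (simp add: w_def)
    have "v \<le> t - 1 + k" using h1 h2 h3 rv rw j0 by linarith
    then show ?thesis by (simp add: v_def)
  qed
qed


lemma repl_out:
  assumes "\<not> (\<exists>t. inner (length p) T i t)" "i < length e"
  shows "repl p q T e ! i = e ! i"
  using assms by (auto simp: repl_def)

lemma repl_in:
  assumes "spaced (length p) T" "inner (length p) T i t" "i < length e"
  shows "repl p q T e ! i = e ! (t - 1 + sig p q (i + 1 - t))"
proof -
  have "(THE t. inner (length p) T i t) = t" by (rule the_inner[OF assms(1,2)])
  then show ?thesis using assms by (auto simp: repl_def)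
qed

lemma repl_inv:
  assumes c: "compat p q" and ch: "changeable p q" and sp: "spaced (length p) T"
    and TE: "T \<subseteq> Em p e" and e: "e \<in> inv_seqs n"
  shows "repl p q T e \<in> inv_seqs n"
proof -
  have le: "length e = n" and inv: "\<forall>i<length e. e ! i < Suc i" using e by (auto simp: inv_seqs_def)
  have "repl p q T e ! i < Suc i" if i: "i < n" for i
  proof (cases "\<exists>t. inner (length p) T i t")
    case True
    then obtain t where t: "inner (length p) T i t" by blast
    have tT: "t \<in> T" and ti: "t \<le> i" and it: "i + 2 < t + length p" using t by (auto simp: inner_def)
    have tE: "t \<in> Em p e" using tT TE by blast
    have t1: "1 \<le> t" using Em_facts(1)[OF tE] .
    define k where "k = i + 1 - t"
    have k: "k < length p" and ik: "i = t - 1 + k" using ti it t1 by (auto simp: k_def)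
    have "repl p q T e ! i = e ! (t - 1 + sig p q k)"
      using window[OF c sp TE tT k] ik by simp
    also have "\<dots> \<le> i" using bound[OF c ch tE inv k] ik by simp
    finally show ?thesis by simp
  next
    case False
    then show ?thesis using repl_out[OF False] i le inv by simp
  qed
  then show ?thesis using le by (simp add: inv_seqs_def)
qed

lemma repl_inverse:
  assumes c: "compat p q" and sp: "spaced (length p) T" and TE: "T \<subseteq> Em p e"
  shows "repl q p T (repl p q T e) = e"
proof (rule nth_equalityI)
  show "length (repl q p T (repl p q T e)) = length e" by simp
  fix i assume "i < length (repl q p T (repl p q T e))"
  then have i: "i < length e" by simp
  have lq: "length q = length p" using c by (simp add: compat_def)
  have c': "compat q p" using compat_sym[OF c] .
  have sp': "spaced (length q) T" using sp lq by simp
  show "repl q p T (repl p q T e) ! i = e ! i"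
  proof (cases "\<exists>t. inner (length p) T i t")
    case True
    then obtain t where t: "inner (length p) T i t" by blast
    have tT: "t \<in> T" and ti: "t \<le> i" and it: "i + 2 < t + length p" using t by (auto simp: inner_def)
    have tE: "t \<in> Em p e" using tT TE by blast
    have t1: "1 \<le> t" using Em_facts(1)[OF tE] .
    define k where "k = i + 1 - t"
    have k: "k < length p" and ik: "i = t - 1 + k" using ti it t1 by (auto simp: k_def)
    have kq: "k < length q" using k lq by simp
    have s1: "sig q p k < length p" "q ! (sig q p k) = p ! k"
      using sig_prop'[OF c' kq] lq by auto
    have s2: "sig p q (sig q p k) < length p" "p ! (sig p q (sig q p k)) = q ! (sig q p k)"
      using sig_prop'[OF c s1(1)] by auto
    have "repl q p T (repl p q T e) ! i = repl p q T e ! (t - 1 + sig q p k)"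
      using repl_in[OF sp', of i t "repl p q T e" p] t lq i by (simp add: k_def)
    also have "\<dots> = e ! (t - 1 + sig p q (sig q p k))" by (rule window[OF c sp TE tT s1(1)])
    also have "\<dots> = e ! (t - 1 + k)" using same_val[OF tE s2(1) k] s2(2) s1(2) by simp
    finally show ?thesis using ik by simp
  next
    case False
    then have F': "\<not> (\<exists>t. inner (length q) T i t)" using lq by simp
    show ?thesis using repl_out[OF F'] repl_out[OF False] i by simp
  qed
qed


lemma finite_inv_seqs: "finite (inv_seqs n)"
proof -
  have "inv_seqs n \<subseteq> {xs. set xs \<subseteq> {..<n} \<and> length xs = n}"
  proof
    fix e assume "e \<in> inv_seqs n"
    then have le: "length e = n" and b: "\<forall>i<n. e ! i < Suc i" by (auto simp: inv_seqs_def)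
    have "set e \<subseteq> {..<n}"
    proof
      fix x assume "x \<in> set e"
      then obtain i where "i < length e" "e ! i = x" by (auto simp: in_set_conv_nth)
      then show "x \<in> {..<n}" using b le by force
    qed
    then show "e \<in> {xs. set xs \<subseteq> {..<n} \<and> length xs = n}" using le by simp
  qed
  moreover have "finite {xs. set xs \<subseteq> {..<n} \<and> length xs = (n::nat)}"
    by (rule finite_lists_length_eq) simp
  ultimately show ?thesis by (rule finite_subset)
qed

lemma card_sup_le:
  assumes c: "compat p q" and ch: "changeable p q" and no: "non_overlapping p"
  shows "card {e \<in> inv_seqs n. T \<subseteq> Em p e} \<le> card {e \<in> inv_seqs n. T \<subseteq> Em q e}"
proof (rule card_inj_on_le[where f = "repl p q T"])
  show "inj_on (repl p q T) {e \<in> inv_seqs n. T \<subseteq> Em p e}"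
    by (rule inj_on_inverseI[where g = "repl q p T"])
       (auto intro: repl_inverse[OF c] spaced_Em[OF no])
  show "repl p q T ` {e \<in> inv_seqs n. T \<subseteq> Em p e} \<subseteq> {e \<in> inv_seqs n. T \<subseteq> Em q e}"
    using repl_inv[OF c ch] repl_Em[OF c] spaced_Em[OF no] by blast
  show "finite {e \<in> inv_seqs n. T \<subseteq> Em q e}" using finite_inv_seqs by simp
qed

lemma Em_sub:
  assumes "1 \<le> length p" "e \<in> inv_seqs n" shows "Em p e \<subseteq> {1..n}"
  using assms by (auto simp: Em_def inv_seqs_def)

lemma decomp:
  assumes "1 \<le> length p" "T \<subseteq> {1..n}"
  shows "card {e \<in> inv_seqs n. T \<subseteq> Em p e} =
    (\<Sum>U\<in>{U. T \<subseteq> U \<and> U \<subseteq> {1..n}}. card {e \<in> inv_seqs n. Em p e = U})"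
proof -
  have "{e \<in> inv_seqs n. T \<subseteq> Em p e} =
      (\<Union>U\<in>{U. T \<subseteq> U \<and> U \<subseteq> {1..n}}. {e \<in> inv_seqs n. Em p e = U})"
    using Em_sub[OF assms(1)] by blast
  moreover have "finite {U. T \<subseteq> U \<and> U \<subseteq> {1..n::nat}}"
    by (rule finite_subset[of _ "Pow {1..n}"]) auto
  ultimately show ?thesis
    by (subst \<open>_ = _\<close>, subst card_UN_disjoint) (auto simp: finite_inv_seqs)
qed

lemma mobius:
  fixes f g :: "nat set \<Rightarrow> nat"
  assumes "\<And>T. T \<subseteq> S \<Longrightarrow> (\<Sum>U\<in>{U. T \<subseteq> U \<and> U \<subseteq> S}. f U) = (\<Sum>U\<in>{U. T \<subseteq> U \<and> U \<subseteq> S}. g U)"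
    and "finite S"
  shows "T \<subseteq> S \<Longrightarrow> f T = g T"
proof (induction "card (S - T)" arbitrary: T rule: less_induct)
  case less
  define UU where "UU = {U. T \<subseteq> U \<and> U \<subseteq> S}"
  have fin: "finite UU" unfolding UU_def by (rule finite_subset[of _ "Pow S"]) (auto simp: assms(2))
  have TU: "T \<in> UU" using less.prems by (simp add: UU_def)
  have rest: "(\<Sum>U\<in>UU - {T}. f U) = (\<Sum>U\<in>UU - {T}. g U)"
  proof (rule sum.cong)
    fix U assume U: "U \<in> UU - {T}"
    then have "T \<subset> U" "U \<subseteq> S" by (auto simp: UU_def)
    then have "S - U \<subset> S - T" by blast
    then have "card (S - U) < card (S - T)" using assms(2) by (simp add: psubset_card_mono)
    then show "f U = g U" using less.hyps \<open>U \<subseteq> S\<close> by blast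
  qed simp
  have "f T + (\<Sum>U\<in>UU - {T}. f U) = g T + (\<Sum>U\<in>UU - {T}. g U)"
    using assms(1)[OF less.prems] sum.remove[OF fin TU, of f] sum.remove[OF fin TU, of g]
    by (simp add: UU_def)
  then show ?case using rest by simp
qed


theorem mainTheorem3:
  fixes p p' :: "nat list"
  assumes "is_pattern p" and "is_pattern p'"
    and "length p = length p'"
    and "non_overlapping p" and "non_overlapping p'"
    and "interchangeable p p'"
  shows "super_strongly_wilf_equiv p p'"
proof -
  have ch1: "changeable p p'" and ch2: "changeable p' p"
    using assms(6) by (auto simp: interchangeable_def)
  have l1: "1 \<le> length p" and e0: "p ! 0 = p' ! 0" and e1: "p ! (length p - 1) = p' ! (length p - 1)"
    and mx: "Max (set p) = Max (set p')"
    using ch1 unfolding changeable_def Let_def by auto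
  have ne: "p \<noteq> []" "p' \<noteq> []" using l1 assms(3) by auto
  have sets: "set p = set p'"
    using pattern_set[OF assms(1) ne(1)] pattern_set[OF assms(2) ne(2)] mx by simp
  have c: "compat p p'" using assms(3) l1 e0 e1 sets by (simp add: compat_def)
  have c': "compat p' p" using compat_sym[OF c] .
  have l1': "1 \<le> length p'" using l1 assms(3) by simp
  show ?thesis unfolding super_strongly_wilf_equiv_def
  proof (intro allI impI)
    fix n T assume T: "T \<subseteq> {1..n::nat}"
    show "card {e \<in> inv_seqs n. Em p e = T} = card {e \<in> inv_seqs n. Em p' e = T}"
    proof (rule mobius[where S = "{1..n}", OF _ _ T])
      fix T' assume T': "T' \<subseteq> {1..n}"
      have "card {e \<in> inv_seqs n. T' \<subseteq> Em p e} = card {e \<in> inv_seqs n. T' \<subseteq> Em p' e}"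
        using card_sup_le[OF c ch1 assms(4)] card_sup_le[OF c' ch2 assms(5)] by (rule le_antisym)
      then show "(\<Sum>U\<in>{U. T' \<subseteq> U \<and> U \<subseteq> {1..n}}. card {e \<in> inv_seqs n. Em p e = U}) =
          (\<Sum>U\<in>{U. T' \<subseteq> U \<and> U \<subseteq> {1..n}}. card {e \<in> inv_seqs n. Em p' e = U})"
        using decomp[OF l1 T'] decomp[OF l1' T'] by simp
    qed simp
  qed
qed

end
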